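(* Along every trajectory of the Physarum dynamics, for every edge $e$ that does not lie on any shortest $s_0$-$s_1$ path, $D_e(t)\to0$ and $Q_e(t)\to 0$ as $t\to\infty$.
   Context: Let $G=(N,E)$ be a finite connected undirected graph with two distinct vertices $s_0$ (source) and $s_1$ (sink). Each edge $e$ has a fixed length $L_e>0$. Each edge has a time-dependent diameter $D_e(t)$ with $D_e(0)>0$, and resistance $R_e=L_e/D_e$. At each time $t$, the vertex potentials $p_v$ (normalized by $p_{s_1}=0$) are the solution of $\sum_{u\in\delta(v)}(p_v-p_u)/R_{uv}=b_v$ for all $v$, where $\delta(v)$ is the set of neighbours of $v$, $b_{s_0}=1$, $b_{s_1}=-1$, $b_v=0$ otherwise; for an edge $e=\{u,v\}$ with an arbitrarily fixed orientation $(u,v)$ the current is $Q_e=(p_u-p_v)/R_e=D_e(p_u-p_v)/L_e$. The diameters evolve by $\dot D_e(t)=|Q_e(t)|-D_e(t)$ for all $e\in E$ (the "Physarum dynamics"). The length of a path is the sum of $L_e$ over its edges. *)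

theory Defs
  imports "HOL-Analysis.Analysis"
begin

text \<open>A (multi)graph: vertex set N, edge set E, each edge e with a fixed
orientation from src e to tgt e.  A path is given by its vertex list vs and
edge list es (consecutive vertices joined by the corresponding edge, in either direction).\<close>

inductive gpath :: "'e set \<Rightarrow> ('e \<Rightarrow> 'v) \<Rightarrow> ('e \<Rightarrow> 'v) \<Rightarrow> 'v list \<Rightarrow> 'e list \<Rightarrow> bool"
  for E src tgt where
  nil: "gpath E src tgt [u] []"
| fwd: "e \<in> E \<Longrightarrow> src e = u \<Longrightarrow> gpath E src tgt (tgt e # vs) es
        \<Longrightarrow> gpath E src tgt (u # tgt e # vs) (e # es)"
| bwd: "e \<in> E \<Longrightarrow> tgt e = u \<Longrightarrow> gpath E src tgt (src e # vs) es
        \<Longrightarrow> gpath E src tgt (u # src e # vs) (e # es)"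

definition st_path :: "'e set \<Rightarrow> ('e \<Rightarrow> 'v) \<Rightarrow> ('e \<Rightarrow> 'v) \<Rightarrow> 'v \<Rightarrow> 'v \<Rightarrow> 'v list \<Rightarrow> 'e list \<Rightarrow> bool" where
  "st_path E src tgt x y vs es \<longleftrightarrow>
     gpath E src tgt vs es \<and> hd vs = x \<and> last vs = y \<and> distinct vs"

definition path_length :: "('e \<Rightarrow> real) \<Rightarrow> 'e list \<Rightarrow> real" where
  "path_length L es = (\<Sum>e\<leftarrow>es. L e)"

definition shortest_path :: "'e set \<Rightarrow> ('e \<Rightarrow> 'v) \<Rightarrow> ('e \<Rightarrow> 'v) \<Rightarrow> ('e \<Rightarrow> real) \<Rightarrow> 'v \<Rightarrow> 'v \<Rightarrow> 'v list \<Rightarrow> 'e list \<Rightarrow> bool" where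
  "shortest_path E src tgt L x y vs es \<longleftrightarrow>
     st_path E src tgt x y vs es \<and>
     (\<forall>vs' es'. st_path E src tgt x y vs' es' \<longrightarrow> path_length L es \<le> path_length L es')"

definition on_shortest_path :: "'e set \<Rightarrow> ('e \<Rightarrow> 'v) \<Rightarrow> ('e \<Rightarrow> 'v) \<Rightarrow> ('e \<Rightarrow> real) \<Rightarrow> 'v \<Rightarrow> 'v \<Rightarrow> 'e \<Rightarrow> bool" where
  "on_shortest_path E src tgt L x y e \<longleftrightarrow>
     (\<exists>vs es. shortest_path E src tgt L x y vs es \<and> e \<in> set es)"

definition phys_graph :: "'v set \<Rightarrow> 'e set \<Rightarrow> ('e \<Rightarrow> 'v) \<Rightarrow> ('e \<Rightarrow> 'v) \<Rightarrow> 'v \<Rightarrow> 'v \<Rightarrow> bool" where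
  "phys_graph N E src tgt s0 s1 \<longleftrightarrow>
     finite N \<and> finite E \<and>
     (\<forall>e\<in>E. src e \<in> N \<and> tgt e \<in> N \<and> src e \<noteq> tgt e) \<and>
     s0 \<in> N \<and> s1 \<in> N \<and> s0 \<noteq> s1 \<and>
     (\<forall>u\<in>N. \<forall>v\<in>N. \<exists>vs es. gpath E src tgt vs es \<and> hd vs = u \<and> last vs = v)"

definition supply_vec :: "'v \<Rightarrow> 'v \<Rightarrow> 'v \<Rightarrow> real" where
  "supply_vec s0 s1 v = (if v = s0 then 1 else if v = s1 then -1 else 0)"

definition current :: "('e \<Rightarrow> 'v) \<Rightarrow> ('e \<Rightarrow> 'v) \<Rightarrow> ('e \<Rightarrow> real) \<Rightarrow> ('e \<Rightarrow> real) \<Rightarrow> ('v \<Rightarrow> real) \<Rightarrow> 'e \<Rightarrow> real" where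
  "current src tgt L d pot e = d e * (pot (src e) - pot (tgt e)) / L e"

text \<open>pot are the normalized potentials for diameters d: Kirchhoff's equations
  sum over incident edges of (p_v - p_u)/R_e = b_v with R_e = L_e / d_e, and p_{s1} = 0.\<close>
definition potentials :: "'v set \<Rightarrow> 'e set \<Rightarrow> ('e \<Rightarrow> 'v) \<Rightarrow> ('e \<Rightarrow> 'v) \<Rightarrow> 'v \<Rightarrow> 'v \<Rightarrow>
    ('e \<Rightarrow> real) \<Rightarrow> ('e \<Rightarrow> real) \<Rightarrow> ('v \<Rightarrow> real) \<Rightarrow> bool" where
  "potentials N E src tgt s0 s1 L d pot \<longleftrightarrow>
     pot s1 = 0 \<and>
     (\<forall>v\<in>N. (\<Sum>e\<in>{e\<in>E. src e = v}. (pot v - pot (tgt e)) / (L e / d e))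
            + (\<Sum>e\<in>{e\<in>E. tgt e = v}. (pot v - pot (src e)) / (L e / d e))
            = supply_vec s0 s1 v)"

end

theory Submission
  imports Defs "HOL-Library.Multiset"
begin

lemma mono_deriv:
  fixes g g' :: "real \<Rightarrow> real"
  assumes "0 \<le> a" "a \<le> b"
    and d: "\<And>t. a \<le> t \<Longrightarrow> t \<le> b \<Longrightarrow> (g has_real_derivative g' t) (at t within {0..})"
    and n: "\<And>t. a < t \<Longrightarrow> t < b \<Longrightarrow> g' t \<ge> 0"
  shows "g a \<le> g b"
proof (rule DERIV_nonneg_imp_increasing_open[OF \<open>a \<le> b\<close>])
  fix x assume x: "a < x" "x < b"
  have "x \<in> interior {0::real..}" using x assms(1) by simp
  hence "at x within {0..} = at x" by (rule at_within_interior)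
  thus "\<exists>y. DERIV g x :> y \<and> 0 \<le> y" using d[of x] n[OF x] x by auto
next
  show "continuous_on {a..b} g"
    by (rule DERIV_continuous_on[where D=g'], rule DERIV_subset[OF d]) (use assms(1) in auto)
qed

lemma gpath_nonempty: "gpath E src tgt vs es \<Longrightarrow> vs \<noteq> []"
  by (induct rule: gpath.induct) auto

lemma gpath_len: "gpath E src tgt vs es \<Longrightarrow> length vs = Suc (length es)"
  by (induct rule: gpath.induct) auto

lemma gpath_edges: "gpath E src tgt vs es \<Longrightarrow> set es \<subseteq> E"
  by (induct rule: gpath.induct) auto

lemma gpath_edge_ends: "gpath E src tgt vs es \<Longrightarrow> e \<in> set es \<Longrightarrow> src e \<in> set vs \<and> tgt e \<in> set vs"
  by (induct rule: gpath.induct) auto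

lemma gpath_verts: "gpath E src tgt vs es \<Longrightarrow> \<forall>e\<in>E. src e \<in> N \<and> tgt e \<in> N \<Longrightarrow> hd vs \<in> N \<Longrightarrow> set vs \<subseteq> N"
  by (induct rule: gpath.induct) auto

lemma gpath_tl: "gpath E src tgt (x # vs) es \<Longrightarrow> vs \<noteq> [] \<Longrightarrow> \<exists>e es'. es = e # es' \<and> gpath E src tgt vs es'"
  by (cases rule: gpath.cases) auto

lemma gpath_drop: "gpath E src tgt (a @ b) es \<Longrightarrow> b \<noteq> [] \<Longrightarrow> gpath E src tgt b (drop (length a) es)"
proof (induct a arbitrary: es)
  case Nil then show ?case by simp
next
  case (Cons x a)
  then obtain e es' where "es = e # es'" "gpath E src tgt (a @ b) es'"
    using gpath_tl[of E src tgt x "a @ b" es] by auto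
  with Cons show ?case by simp
qed

lemma mset_drop_sub: "mset (drop k xs) \<subseteq># mset xs"
  by (metis append_take_drop_id mset_append mset_subset_eq_add_right)

lemma add_mset_sub: "A \<subseteq># B \<Longrightarrow> A \<subseteq># add_mset x B"
  using subset_mset.trans by fastforce

lemma gpath_simplify:
  "gpath E src tgt vs es \<Longrightarrow> \<exists>vs' es'. gpath E src tgt vs' es' \<and> hd vs' = hd vs \<and> last vs' = last vs
      \<and> distinct vs' \<and> mset es' \<subseteq># mset es"
proof (induct rule: gpath.induct)
  case (nil u) then show ?case by (intro exI[of _ "[u]"] exI[of _ "[]"]) (auto intro: gpath.nil)
next
  case (fwd e u vs es)
  then obtain vs' es' where p: "gpath E src tgt vs' es'" "hd vs' = tgt e" "last vs' = last (tgt e # vs)"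
    "distinct vs'" "mset es' \<subseteq># mset es" by auto
  have ne: "vs' \<noteq> []" using gpath_nonempty[OF p(1)] .
  show ?case
  proof (cases "u \<in> set vs'")
    case True
    then obtain a b where ab: "vs' = a @ u # b" by (meson split_list)
    have g: "gpath E src tgt (u # b) (drop (length a) es')" using gpath_drop[of E src tgt a "u # b" es'] p(1) ab by simp
    have "mset (drop (length a) es') \<subseteq># mset (e # es)"
      using subset_mset.trans[OF mset_drop_sub[of "length a" es'] p(5)] by (simp add: add_mset_sub)
    then show ?thesis using g p ab by (intro exI[of _ "u # b"] exI[of _ "drop (length a) es'"]) auto
  next
    case False
    obtain r where r: "vs' = tgt e # r" using ne p(2) by (cases vs') auto
    have "gpath E src tgt (u # tgt e # r) (e # es')" using gpath.fwd[of e E src u tgt r es'] fwd(1,2) p(1) r by simp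
    moreover have "mset (e # es') \<subseteq># mset (e # es)" using p(5) by simp
    ultimately show ?thesis using p False r by (intro exI[of _ "u # vs'"] exI[of _ "e # es'"]) auto
  qed
next
  case (bwd e u vs es)
  then obtain vs' es' where p: "gpath E src tgt vs' es'" "hd vs' = src e" "last vs' = last (src e # vs)"
    "distinct vs'" "mset es' \<subseteq># mset es" by auto
  have ne: "vs' \<noteq> []" using gpath_nonempty[OF p(1)] .
  show ?case
  proof (cases "u \<in> set vs'")
    case True
    then obtain a b where ab: "vs' = a @ u # b" by (meson split_list)
    have g: "gpath E src tgt (u # b) (drop (length a) es')" using gpath_drop[of E src tgt a "u # b" es'] p(1) ab by simp
    have "mset (drop (length a) es') \<subseteq># mset (e # es)"
      using subset_mset.trans[OF mset_drop_sub[of "length a" es'] p(5)] by (simp add: add_mset_sub)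
    then show ?thesis using g p ab by (intro exI[of _ "u # b"] exI[of _ "drop (length a) es'"]) auto
  next
    case False
    obtain r where r: "vs' = src e # r" using ne p(2) by (cases vs') auto
    have "gpath E src tgt (u # src e # r) (e # es')" using gpath.bwd[of e E tgt u src r es'] bwd(1,2) p(1) r by simp
    moreover have "mset (e # es') \<subseteq># mset (e # es)" using p(5) by simp
    ultimately show ?thesis using p False r by (intro exI[of _ "u # vs'"] exI[of _ "e # es'"]) auto
  qed
qed

lemma sum_list_submset:
  fixes f :: "'a \<Rightarrow> real"
  assumes "mset xs \<subseteq># mset ys" "\<forall>x\<in>set ys. f x \<ge> 0"
  shows "sum_list (map f xs) \<le> sum_list (map f ys)"
proof -
  obtain C where C: "mset ys = mset xs + C" using assms(1) mset_subset_eq_exists_conv by blast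
  have "sum_list (map f ys) = sum_mset (image_mset f (mset ys))" by (metis mset_map sum_mset_sum_list)
  also have "\<dots> = sum_mset (image_mset f (mset xs)) + sum_mset (image_mset f C)" using C by simp
  also have "sum_mset (image_mset f (mset xs)) = sum_list (map f xs)" by (metis mset_map sum_mset_sum_list)
  also have "sum_mset (image_mset f C) \<ge> 0"
  proof -
    have "set_mset C \<subseteq> set ys" using C by (metis Un_upper2 set_mset_mset set_mset_union)
    hence "\<forall>x\<in>#C. f x \<ge> 0" using assms(2) by auto
    thus ?thesis by (induct C) auto
  qed
  ultimately show ?thesis by linarith
qed

lemma gpath_telescope:
  fixes f :: "'v \<Rightarrow> real"
  shows "gpath E src tgt vs es \<Longrightarrow> f (hd vs) - f (last vs) \<le> (\<Sum>e\<leftarrow>es. \<bar>f (src e) - f (tgt e)\<bar>)"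
  by (induct rule: gpath.induct) auto


lemma flow_identity:
  fixes f :: "'v \<Rightarrow> real"
  assumes fin: "finite N" "finite E" and ends: "\<forall>e\<in>E. src e \<in> N \<and> tgt e \<in> N"
    and s: "s0 \<in> N" "s1 \<in> N" "s0 \<noteq> s1"
    and pot: "potentials N E src tgt s0 s1 L d pot"
  shows "(\<Sum>e\<in>E. (f (src e) - f (tgt e)) * current src tgt L d pot e) = f s0 - f s1"
proof -
  let ?Q = "current src tgt L d pot"
  have k: "(\<Sum>e\<in>{e\<in>E. src e = v}. ?Q e) - (\<Sum>e\<in>{e\<in>E. tgt e = v}. ?Q e) = supply_vec s0 s1 v"
    if "v \<in> N" for v
  proof -
    have 1: "(\<Sum>e\<in>{e\<in>E. src e = v}. (pot v - pot (tgt e)) / (L e / d e)) = (\<Sum>e\<in>{e\<in>E. src e = v}. ?Q e)"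
      by (rule sum.cong) (auto simp: current_def divide_divide_eq_right mult.commute)
    have 2: "(\<Sum>e\<in>{e\<in>E. tgt e = v}. (pot v - pot (src e)) / (L e / d e)) = (\<Sum>e\<in>{e\<in>E. tgt e = v}. - ?Q e)"
      by (rule sum.cong) (auto simp: current_def divide_divide_eq_right mult.commute right_diff_distrib, simp add: divide_simps)
    have 3: "(\<Sum>e\<in>{e\<in>E. src e = v}. (pot v - pot (tgt e)) / (L e / d e)) + (\<Sum>e\<in>{e\<in>E. tgt e = v}. (pot v - pot (src e)) / (L e / d e)) = supply_vec s0 s1 v"
      using pot that unfolding potentials_def by blast
    show ?thesis using 3 unfolding 1 2 sum_negf by linarith
  qed
  have a: "(\<Sum>e\<in>E. (f (src e) - f (tgt e)) * ?Q e) = (\<Sum>e\<in>E. f (src e) * ?Q e) - (\<Sum>e\<in>E. f (tgt e) * ?Q e)"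
    by (simp add: left_diff_distrib sum_subtractf)
  have b: "(\<Sum>e\<in>E. f (src e) * ?Q e) = (\<Sum>v\<in>N. f v * (\<Sum>e\<in>{e\<in>E. src e = v}. ?Q e))"
  proof -
    have "(\<Sum>e\<in>E. f (src e) * ?Q e) = (\<Sum>v\<in>N. \<Sum>e\<in>{e\<in>E. src e = v}. f (src e) * ?Q e)"
      by (rule sum.group[symmetric]) (use fin ends in auto)
    also have "\<dots> = (\<Sum>v\<in>N. f v * (\<Sum>e\<in>{e\<in>E. src e = v}. ?Q e))"
      by (auto simp: sum_distrib_left intro!: sum.cong)
    finally show ?thesis .
  qed
  have c: "(\<Sum>e\<in>E. f (tgt e) * ?Q e) = (\<Sum>v\<in>N. f v * (\<Sum>e\<in>{e\<in>E. tgt e = v}. ?Q e))"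
  proof -
    have "(\<Sum>e\<in>E. f (tgt e) * ?Q e) = (\<Sum>v\<in>N. \<Sum>e\<in>{e\<in>E. tgt e = v}. f (tgt e) * ?Q e)"
      by (rule sum.group[symmetric]) (use fin ends in auto)
    also have "\<dots> = (\<Sum>v\<in>N. f v * (\<Sum>e\<in>{e\<in>E. tgt e = v}. ?Q e))"
      by (auto simp: sum_distrib_left intro!: sum.cong)
    finally show ?thesis .
  qed
  have d: "(\<Sum>v\<in>N. f v * (\<Sum>e\<in>{e\<in>E. src e = v}. ?Q e)) - (\<Sum>v\<in>N. f v * (\<Sum>e\<in>{e\<in>E. tgt e = v}. ?Q e))
      = (\<Sum>v\<in>N. f v * supply_vec s0 s1 v)"
    by (simp add: sum_subtractf[symmetric] right_diff_distrib[symmetric] k)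
  have e: "(\<lambda>v. f v * supply_vec s0 s1 v) = (\<lambda>v. (if v = s0 then f s0 else 0) - (if v = s1 then f s1 else 0))"
    using s(3) by (auto simp: supply_vec_def fun_eq_iff)
  have "(\<Sum>v\<in>N. f v * supply_vec s0 s1 v) = f s0 - f s1"
    unfolding e sum_subtractf using fin s by simp
  then show ?thesis using a b c d by simp
qed


locale physg =
  fixes N :: "'v set" and E :: "'e set" and src tgt :: "'e \<Rightarrow> 'v" and s0 s1 :: 'v
    and L :: "'e \<Rightarrow> real" and e0 :: 'e
  assumes graph: "phys_graph N E src tgt s0 s1"
    and len_pos: "\<forall>e\<in>E. L e > 0"
    and e0_in: "e0 \<in> E"
    and not_short: "\<not> on_shortest_path E src tgt L s0 s1 e0"
begin

lemma finN: "finite N" and finE: "finite E" and ends: "\<forall>e\<in>E. src e \<in> N \<and> tgt e \<in> N"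
  and s0N: "s0 \<in> N" and s1N: "s1 \<in> N" and s01: "s0 \<noteq> s1"
  and conn: "\<forall>u\<in>N. \<forall>v\<in>N. \<exists>vs es. gpath E src tgt vs es \<and> hd vs = u \<and> last vs = v"
  using graph unfolding phys_graph_def by auto

definition "PS = {(vs, es). st_path E src tgt s0 s1 vs es}"

lemma PS_finite: "finite PS"
proof -
  have "PS \<subseteq> {vs. set vs \<subseteq> N \<and> length vs \<le> card N} \<times> {es. set es \<subseteq> E \<and> length es \<le> card N}"
  proof
    fix q assume "q \<in> PS"
    then obtain vs es where q: "q = (vs, es)" "gpath E src tgt vs es" "hd vs = s0" "distinct vs"
      unfolding PS_def st_path_def by auto
    have sv: "set vs \<subseteq> N" using gpath_verts[OF q(2)] ends s0N q(3) by auto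
    have "length vs \<le> card N" using distinct_card[OF q(4)] card_mono[OF finN sv] by simp
    moreover have "length es \<le> card N" using gpath_len[OF q(2)] calculation by simp
    ultimately show "q \<in> {vs. set vs \<subseteq> N \<and> length vs \<le> card N} \<times> {es. set es \<subseteq> E \<and> length es \<le> card N}"
      using q sv gpath_edges[OF q(2)] by auto
  qed
  moreover have "finite ({vs. set vs \<subseteq> N \<and> length vs \<le> card N} \<times> {es. set es \<subseteq> E \<and> length es \<le> card N})"
    using finite_lists_length_le[OF finN] finite_lists_length_le[OF finE] by blast
  ultimately show ?thesis by (rule finite_subset)
qed

lemma walk_to_path:
  assumes "gpath E src tgt vs es" "hd vs = s0" "last vs = s1"
  shows "\<exists>vs' es'. st_path E src tgt s0 s1 vs' es' \<and> mset es' \<subseteq># mset es"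
  using gpath_simplify[OF assms(1)] assms unfolding st_path_def by metis

lemma PS_nonempty: "PS \<noteq> {}"
proof -
  obtain vs es where "gpath E src tgt vs es" "hd vs = s0" "last vs = s1" using conn s0N s1N by blast
  then obtain vs' es' where "st_path E src tgt s0 s1 vs' es'" using walk_to_path by blast
  thus ?thesis unfolding PS_def by auto
qed

definition "plen q = path_length L (snd q)"

lemma exists_shortest: "\<exists>q\<in>PS. \<forall>q'\<in>PS. plen q \<le> plen q'"
proof -
  have "Min (plen ` PS) \<in> plen ` PS" using PS_finite PS_nonempty by (intro Min_in) auto
  then obtain q where q: "q \<in> PS" "plen q = Min (plen ` PS)" by auto
  have "\<forall>q'\<in>PS. plen q \<le> plen q'" using q(2) PS_finite by auto
  with q show ?thesis by blast
qed

definition Lp :: "real \<Rightarrow> 'e \<Rightarrow> real" where "Lp \<delta> e = L e - (if e = e0 then \<delta> else 0)"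

lemma path_length_Lp: "path_length (Lp \<delta>) es = path_length L es - \<delta> * count_list es e0"
  by (induct es) (auto simp: path_length_def Lp_def algebra_simps)

lemma path_length_nonneg: "set es \<subseteq> E \<Longrightarrow> (\<forall>e\<in>E. f e \<ge> 0) \<Longrightarrow> path_length f es \<ge> 0"
  unfolding path_length_def by (induct es) auto

lemma gap_exists:
  assumes qs: "qs \<in> PS" "\<forall>q'\<in>PS. plen qs \<le> plen q'"
  shows "\<exists>\<delta>>0. \<delta> < L e0 \<and> (\<forall>q\<in>PS. plen qs \<le> plen q - \<delta> * count_list (snd q) e0)"
proof -
  define G where "G = {q \<in> PS. e0 \<in> set (snd q)}"
  have finG: "finite G" using PS_finite G_def by auto
  have gt: "plen q > plen qs" if qG0: "q \<in> G" for q
  proof -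
    obtain vs es where q: "q = (vs, es)" "st_path E src tgt s0 s1 vs es" "e0 \<in> set es"
      using qG0 unfolding G_def PS_def by (cases q) auto
    have "\<not> shortest_path E src tgt L s0 s1 vs es" using not_short q unfolding on_shortest_path_def by blast
    then obtain vs' es' where "st_path E src tgt s0 s1 vs' es'" "path_length L es > path_length L es'"
      using q(2) unfolding shortest_path_def by auto
    moreover have "plen qs \<le> plen (vs', es')" using assms(2) calculation(1) unfolding PS_def by auto
    ultimately show ?thesis using q unfolding plen_def by auto
  qed
  define A where "A = insert (L e0 / 2) ((\<lambda>q. (plen q - plen qs) / (real (length (snd q)) + 1)) ` G)"
  define \<delta> where "\<delta> = Min A"
  have finA: "finite A" "A \<noteq> {}" using finG A_def by auto
  have dpos: "\<delta> > 0" unfolding \<delta>_def using finA Min_gr_iff[OF finA] gt len_pos e0_in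
    by (auto simp: A_def)
  have dL: "\<delta> < L e0" using Min_le[OF finA(1), of "L e0 / 2"] len_pos e0_in unfolding \<delta>_def A_def by auto
  have "plen qs \<le> plen q - \<delta> * count_list (snd q) e0" if "q \<in> PS" for q
  proof (cases "e0 \<in> set (snd q)")
    case False
    hence "count_list (snd q) e0 = 0" by (simp add: count_list_0_iff)
    thus ?thesis using assms(2) that by simp
  next
    case True
    hence qG: "q \<in> G" using that G_def by auto
    have "\<delta> \<le> (plen q - plen qs) / (real (length (snd q)) + 1)"
      unfolding \<delta>_def by (rule Min_le[OF finA(1)]) (use qG A_def in auto)
    hence h1: "\<delta> * (real (length (snd q)) + 1) \<le> plen q - plen qs" by (simp add: field_simps)
    have h2: "\<delta> * count_list (snd q) e0 \<le> \<delta> * real (length (snd q))"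
      using dpos count_le_length[of "snd q" e0] by (intro mult_left_mono) auto
    have h1': "\<delta> * real (length (snd q)) + \<delta> \<le> plen q - plen qs" using h1 by (simp add: algebra_simps)
    show ?thesis using h1' h2 dpos by linarith
  qed
  thus ?thesis using dpos dL by blast
qed

lemma dual_exists:
  assumes qs: "qs \<in> PS" "\<forall>q'\<in>PS. plen qs \<le> plen q'"
  shows "\<exists>\<delta>>0. \<delta> < L e0 \<and> (\<exists>d::'v\<Rightarrow>real. (\<forall>e\<in>E. \<bar>d (src e) - d (tgt e)\<bar> \<le> Lp \<delta> e) \<and> plen qs \<le> d s0 - d s1)"
proof -
  obtain \<delta> where dpos: "\<delta> > 0" and dL: "\<delta> < L e0"
    and gap: "\<forall>q\<in>PS. plen qs \<le> plen q - \<delta> * count_list (snd q) e0"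
    using gap_exists[OF qs] by blast
  have Lpnn: "\<forall>e\<in>E. Lp \<delta> e \<ge> 0" using len_pos dL unfolding Lp_def by auto
  define W where "W v = {path_length (Lp \<delta>) es | vs es. gpath E src tgt vs es \<and> hd vs = v \<and> last vs = s1}" for v
  define d where "d v = Inf (W v)" for v
  have bdd: "bdd_below (W v)" for v
    unfolding W_def bdd_below_def using path_length_nonneg[OF gpath_edges Lpnn] by blast
  have ne: "W v \<noteq> {}" if "v \<in> N" for v
    using conn that s1N unfolding W_def by blast
  have d1: "d s1 \<le> 0"
  proof -
    have "0 \<in> W s1" unfolding W_def
      by (rule CollectI, rule exI[of _ "[s1]"], rule exI[of _ "[]"]) (auto simp: path_length_def intro: gpath.nil)
    thus ?thesis unfolding d_def by (rule cInf_lower[OF _ bdd])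
  qed
  have d0: "plen qs \<le> d s0"
    unfolding d_def
  proof (rule cInf_greatest[OF ne[OF s0N]])
    fix w assume "w \<in> W s0"
    then obtain vs es where w: "w = path_length (Lp \<delta>) es" "gpath E src tgt vs es" "hd vs = s0" "last vs = s1"
      unfolding W_def by blast
    obtain vs' es' where p: "st_path E src tgt s0 s1 vs' es'" "mset es' \<subseteq># mset es"
      using walk_to_path[OF w(2-4)] by blast
    have "path_length (Lp \<delta>) es' \<le> path_length (Lp \<delta>) es"
      unfolding path_length_def by (rule sum_list_submset[OF p(2)]) (use Lpnn gpath_edges[OF w(2)] in auto)
    moreover have "plen qs \<le> path_length (Lp \<delta>) es'"
      using gap p(1) unfolding path_length_Lp PS_def plen_def by auto
    ultimately show "plen qs \<le> w" using w(1) by linarith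
  qed
  have tri: "\<bar>d (src e) - d (tgt e)\<bar> \<le> Lp \<delta> e" if eE: "e \<in> E" for e
  proof -
    have a: "d u \<le> Lp \<delta> e + d v" if uv: "(u = src e \<and> v = tgt e) \<or> (u = tgt e \<and> v = src e)" for u v
    proof -
      have vN: "v \<in> N" using uv ends eE by auto
      have "d u - Lp \<delta> e \<le> d v" unfolding d_def
      proof (rule cInf_greatest[OF ne[OF vN]])
        fix w assume "w \<in> W v"
        then obtain vs es where w: "w = path_length (Lp \<delta>) es" "gpath E src tgt vs es" "hd vs = v" "last vs = s1"
          unfolding W_def by blast
        obtain r where r: "vs = v # r" using gpath_nonempty[OF w(2)] w(3) by (cases vs) auto
        have g: "gpath E src tgt (u # vs) (e # es)"
          using uv r w(2) eE gpath.fwd[of e E src u tgt r es] gpath.bwd[of e E tgt u src r es] by auto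
        have "path_length (Lp \<delta>) (e # es) \<in> W u" unfolding W_def using g w r by fastforce
        hence "Inf (W u) \<le> Lp \<delta> e + w" using cInf_lower[OF _ bdd] w(1) by (simp add: path_length_def)
        thus "Inf (W u) - Lp \<delta> e \<le> w" by simp
      qed
      thus ?thesis by simp
    qed
    show ?thesis using a[of "src e" "tgt e"] a[of "tgt e" "src e"] by auto
  qed
  show ?thesis using dpos dL tri d0 d1 by (intro exI[of _ \<delta>]) (auto intro!: exI[of _ d])
qed

lemma S_bound:
  "\<exists>qs\<in>PS. \<exists>\<delta>>0. \<forall>x p. potentials N E src tgt s0 s1 L x p \<longrightarrow>
     plen qs + \<delta> * \<bar>current src tgt L x p e0\<bar> \<le> (\<Sum>e\<in>E. L e * \<bar>current src tgt L x p e\<bar>)"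
proof -
  obtain qs where qs: "qs \<in> PS" "\<forall>q'\<in>PS. plen qs \<le> plen q'" using exists_shortest by blast
  obtain \<delta> d where dpos: "\<delta> > 0" and tri: "\<forall>e\<in>E. \<bar>d (src e) - d (tgt e)\<bar> \<le> Lp \<delta> e"
    and dd: "plen qs \<le> d s0 - d s1"
    using dual_exists[OF qs] by blast
  have "plen qs + \<delta> * \<bar>current src tgt L x p e0\<bar> \<le> (\<Sum>e\<in>E. L e * \<bar>current src tgt L x p e\<bar>)"
    if pot: "potentials N E src tgt s0 s1 L x p" for x p
  proof -
    let ?Q = "current src tgt L x p"
    have fi: "(\<Sum>e\<in>E. (d (src e) - d (tgt e)) * ?Q e) = d s0 - d s1"
      by (rule flow_identity[OF finN finE ends s0N s1N s01 pot])
    have le: "(\<Sum>e\<in>E. (d (src e) - d (tgt e)) * ?Q e) \<le> (\<Sum>e\<in>E. Lp \<delta> e * \<bar>?Q e\<bar>)"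
    proof (rule sum_mono)
      fix e assume "e \<in> E"
      have "(d (src e) - d (tgt e)) * ?Q e \<le> \<bar>d (src e) - d (tgt e)\<bar> * \<bar>?Q e\<bar>"
        by (metis abs_ge_self abs_mult)
      also have "\<dots> \<le> Lp \<delta> e * \<bar>?Q e\<bar>" using tri \<open>e \<in> E\<close> by (intro mult_right_mono) auto
      finally show "(d (src e) - d (tgt e)) * ?Q e \<le> Lp \<delta> e * \<bar>?Q e\<bar>" .
    qed
    have sp: "(\<Sum>e\<in>E. L e * \<bar>?Q e\<bar>) = (\<Sum>e\<in>E. Lp \<delta> e * \<bar>?Q e\<bar>) + (\<Sum>e\<in>E. (if e = e0 then \<delta> * \<bar>?Q e\<bar> else 0))"
      unfolding sum.distrib[symmetric] by (rule sum.cong) (auto simp: Lp_def algebra_simps)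
    have "(\<Sum>e\<in>E. (if e = e0 then \<delta> * \<bar>?Q e\<bar> else 0)) = \<delta> * \<bar>?Q e0\<bar>"
      using finE e0_in by (simp add: sum.delta)
    thus ?thesis using sp le fi dd by linarith
  qed
  thus ?thesis using qs dpos by blast
qed


context
  fixes x :: "'e \<Rightarrow> real" and p :: "'v \<Rightarrow> real"
  assumes potx: "potentials N E src tgt s0 s1 L x p" and xpos: "\<forall>e\<in>E. x e > 0"
begin

lemma p_s1: "p s1 = 0" using potx unfolding potentials_def by simp

lemma energy: "(\<Sum>e\<in>E. (p (src e) - p (tgt e)) * current src tgt L x p e) = p s0"
  using flow_identity[OF finN finE ends s0N s1N s01 potx, of p] p_s1 by simp

lemma term_eq: "(p (src e) - p (tgt e)) * current src tgt L x p e = x e * (p (src e) - p (tgt e))^2 / L e"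
  by (simp add: current_def power2_eq_square)

lemma term_nonneg: "e \<in> E \<Longrightarrow> 0 \<le> (p (src e) - p (tgt e)) * current src tgt L x p e"
proof -
  assume "e \<in> E"
  hence "x e > 0" "L e > 0" using xpos len_pos by auto
  thus ?thesis unfolding term_eq by simp
qed

lemma En_nonneg: "0 \<le> p s0"
  unfolding energy[symmetric] by (rule sum_nonneg) (rule term_nonneg)

lemma term_le: "e \<in> E \<Longrightarrow> x e * (p (src e) - p (tgt e))^2 / L e \<le> p s0"
  unfolding energy[symmetric] term_eq[symmetric]
  by (rule member_le_sum) (use term_nonneg finE in auto)

lemma LQ: "e \<in> E \<Longrightarrow> L e * \<bar>current src tgt L x p e\<bar> = x e * \<bar>p (src e) - p (tgt e)\<bar>"
proof -
  assume "e \<in> E"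
  hence "x e > 0" "L e > 0" using xpos len_pos by auto
  thus ?thesis by (simp add: current_def abs_mult abs_divide)
qed

lemma y_pos: "0 < (\<Sum>e\<in>E. L e * x e)"
proof -
  have "L e0 * x e0 \<le> (\<Sum>e\<in>E. L e * x e)"
    by (rule member_le_sum) (use e0_in finE xpos len_pos in \<open>auto intro!: mult_nonneg_nonneg less_imp_le\<close>)
  moreover have "0 < L e0 * x e0" using e0_in xpos len_pos by auto
  ultimately show ?thesis by linarith
qed

lemma CS: "(\<Sum>e\<in>E. L e * \<bar>current src tgt L x p e\<bar>)^2 \<le> p s0 * (\<Sum>e\<in>E. L e * x e)"
proof -
  define \<Delta> where "\<Delta> e = p (src e) - p (tgt e)" for e
  define S where "S = (\<Sum>e\<in>E. L e * \<bar>current src tgt L x p e\<bar>)"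
  define Y where "Y = (\<Sum>e\<in>E. L e * x e)"
  define l where "l = S / Y"
  have Yp: "Y > 0" using y_pos Y_def by simp
  have "0 \<le> (\<Sum>e\<in>E. x e / L e * (\<bar>\<Delta> e\<bar> - l * L e)^2)"
    using xpos len_pos by (intro sum_nonneg mult_nonneg_nonneg divide_nonneg_nonneg) (auto intro: less_imp_le)
  also have "\<dots> = (\<Sum>e\<in>E. x e * (\<Delta> e)^2 / L e - 2 * l * (x e * \<bar>\<Delta> e\<bar>) + l^2 * (L e * x e))"
  proof (rule sum.cong)
    fix e assume "e \<in> E"
    hence "L e \<noteq> 0" using len_pos by auto
    thus "x e / L e * (\<bar>\<Delta> e\<bar> - l * L e)^2 = x e * (\<Delta> e)^2 / L e - 2 * l * (x e * \<bar>\<Delta> e\<bar>) + l^2 * (L e * x e)"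
    proof -
      have sq: "(\<bar>\<Delta> e\<bar> - l * L e)^2 = (\<Delta> e)^2 - 2 * l * L e * \<bar>\<Delta> e\<bar> + l^2 * (L e)^2"
        by (simp add: power2_diff power_mult_distrib algebra_simps)
      show ?thesis unfolding sq using \<open>L e \<noteq> 0\<close> by (simp add: field_simps power2_eq_square)
    qed
  qed simp
  also have "\<dots> = (\<Sum>e\<in>E. x e * (\<Delta> e)^2 / L e) - 2 * l * (\<Sum>e\<in>E. x e * \<bar>\<Delta> e\<bar>) + l^2 * Y"
    unfolding Y_def by (simp add: sum.distrib sum_subtractf sum_distrib_left)
  also have "(\<Sum>e\<in>E. x e * (\<Delta> e)^2 / L e) = p s0"
    unfolding energy[symmetric] \<Delta>_def term_eq ..
  also have "(\<Sum>e\<in>E. x e * \<bar>\<Delta> e\<bar>) = S"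
    unfolding S_def \<Delta>_def by (rule sum.cong) (auto simp: LQ)
  finally have "0 \<le> p s0 - 2 * l * S + l^2 * Y" .
  also have "p s0 - 2 * l * S + l^2 * Y = p s0 - S^2 / Y"
    unfolding l_def using Yp by (simp add: power2_eq_square field_simps)
  finally have "S^2 / Y \<le> p s0" by simp
  hence "S^2 \<le> p s0 * Y" using Yp by (simp add: field_simps)
  thus ?thesis unfolding S_def Y_def .
qed

lemma tele: "gpath E src tgt vs es \<Longrightarrow> hd vs = s0 \<Longrightarrow> last vs = s1 \<Longrightarrow>
    p s0 \<le> (\<Sum>e\<leftarrow>es. \<bar>p (src e) - p (tgt e)\<bar>)"
  using gpath_telescope[of E src tgt vs es p] p_s1 by simp

lemma Q0_sq: "(current src tgt L x p e0)^2 \<le> x e0 * p s0 / L e0"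
proof -
  have "(current src tgt L x p e0)^2 = (x e0 / L e0) * (x e0 * (p (src e0) - p (tgt e0))^2 / L e0)"
    by (simp add: current_def power2_eq_square field_simps)
  also have "\<dots> \<le> (x e0 / L e0) * p s0"
    using term_le[OF e0_in] xpos len_pos e0_in by (intro mult_left_mono) (auto intro!: divide_nonneg_nonneg less_imp_le)
  finally show ?thesis by simp
qed

end

end

lemma DERIV_sum_list:
  fixes f :: "'a \<Rightarrow> real \<Rightarrow> real"
  shows "(\<And>e. e \<in> set es \<Longrightarrow> ((\<lambda>t. f e t) has_real_derivative f' e) (at t within s)) \<Longrightarrow>
    ((\<lambda>t. \<Sum>e\<leftarrow>es. f e t) has_real_derivative (\<Sum>e\<leftarrow>es. f' e)) (at t within s)"
  by (induct es) (auto intro!: DERIV_add)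

lemma sum_list_single_ge:
  fixes f :: "'a \<Rightarrow> real"
  shows "(\<forall>e\<in>set es. f e \<le> 0) \<Longrightarrow> e1 \<in> set es \<Longrightarrow> (\<Sum>e\<leftarrow>es. f e) \<le> f e1"
proof (induct es)
  case (Cons a es)
  show ?case
  proof (cases "e1 = a")
    case True
    have "(\<Sum>e\<leftarrow>es. f e) \<le> 0" using Cons(2) by (induct es) auto
    thus ?thesis using True by simp
  next
    case False thus ?thesis using Cons by auto
  qed
qed simp

lemma sum_list_pos:
  fixes f :: "'a \<Rightarrow> real"
  shows "(\<forall>e\<in>set es. f e > 0) \<Longrightarrow> es \<noteq> [] \<Longrightarrow> (\<Sum>e\<leftarrow>es. f e) > 0"
proof (induct es)
  case (Cons a es)
  have "(\<Sum>e\<leftarrow>es. f e) \<ge> 0" using Cons(2) by (intro sum_list_nonneg) (auto intro: less_imp_le)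
  thus ?case using Cons(2) by simp
qed simp

locale physd = physg N E src tgt s0 s1 L e0 for N :: "'v set" and E :: "'e set" and src tgt s0 s1 L e0 +
  fixes D :: "'e \<Rightarrow> real \<Rightarrow> real" and p :: "real \<Rightarrow> 'v \<Rightarrow> real"
  assumes init_pos: "\<forall>e\<in>E. D e 0 > 0"
    and pot: "\<forall>t\<ge>0. potentials N E src tgt s0 s1 L (\<lambda>e. D e t) (p t)"
    and dyn: "\<forall>e\<in>E. \<forall>t\<ge>0. (D e has_real_derivative
                 (\<bar>current src tgt L (\<lambda>e'. D e' t) (p t) e\<bar> - D e t)) (at t within {0..})"
begin

definition "Q e t = current src tgt L (\<lambda>e'. D e' t) (p t) e"

lemma dynQ: "e \<in> E \<Longrightarrow> t \<ge> 0 \<Longrightarrow> (D e has_real_derivative (\<bar>Q e t\<bar> - D e t)) (at t within {0..})"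
  using dyn unfolding Q_def by blast

lemma exp_mono_D:
  assumes "e \<in> E" "0 \<le> a" "a \<le> b"
  shows "D e a * exp a \<le> D e b * exp b"
proof (rule mono_deriv[OF assms(2,3), where g' = "\<lambda>t. \<bar>Q e t\<bar> * exp t"])
  fix t assume t: "a \<le> t" "t \<le> b"
  have "((\<lambda>t. D e t * exp t) has_real_derivative (D e t * exp t + (\<bar>Q e t\<bar> - D e t) * exp t)) (at t within {0..})"
    by (rule DERIV_mult'[OF dynQ[OF assms(1)] has_field_derivative_at_within[OF DERIV_exp]]) (use t assms in auto)
  thus "((\<lambda>t. D e t * exp t) has_real_derivative \<bar>Q e t\<bar> * exp t) (at t within {0..})"
    by (rule DERIV_cong) (simp add: algebra_simps)
qed simp

lemma D_pos: "e \<in> E \<Longrightarrow> t \<ge> 0 \<Longrightarrow> D e t > 0"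
proof -
  assume a: "e \<in> E" "t \<ge> 0"
  have "D e 0 \<le> D e t * exp t" using exp_mono_D[OF a(1) order_refl a(2)] by simp
  hence "0 < D e t * exp t" using init_pos a by (meson less_le_trans)
  thus ?thesis by (simp add: zero_less_mult_iff)
qed

lemma potT: "t \<ge> 0 \<Longrightarrow> potentials N E src tgt s0 s1 L (\<lambda>e. D e t) (p t)" using pot by blast
lemma posT: "t \<ge> 0 \<Longrightarrow> \<forall>e\<in>E. D e t > 0" using D_pos by blast


lemma main: "((\<lambda>t. D e0 t) \<longlongrightarrow> 0) at_top \<and> ((\<lambda>t. Q e0 t) \<longlongrightarrow> 0) at_top"
proof -
  obtain qs \<delta> where qs: "qs \<in> PS" and dpos: "\<delta> > 0"
    and Sb: "\<And>x p. potentials N E src tgt s0 s1 L x p \<Longrightarrow>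
       plen qs + \<delta> * \<bar>current src tgt L x p e0\<bar> \<le> (\<Sum>e\<in>E. L e * \<bar>current src tgt L x p e\<bar>)"
    using S_bound by blast
  obtain vs es where qse: "qs = (vs, es)" by (cases qs)
  have st: "st_path E src tgt s0 s1 vs es" using qs qse unfolding PS_def by auto
  hence gp: "gpath E src tgt vs es" "hd vs = s0" "last vs = s1" unfolding st_path_def by auto
  have esE: "set es \<subseteq> E" using gpath_edges[OF gp(1)] .
  have esne: "es \<noteq> []"
  proof
    assume "es = []"
    then obtain u where "vs = [u]" using gpath_len[OF gp(1)] by (cases vs) auto
    thus False using gp s01 by simp
  qed
  define Ls where "Ls = path_length L es"
  have Lsp: "Ls > 0" unfolding Ls_def path_length_def using esE esne len_pos by (intro sum_list_pos) auto
  have Ls_q: "plen qs = Ls" unfolding plen_def qse Ls_def by simp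
  define y where "y t = (\<Sum>e\<in>E. L e * D e t)" for t
  have yfun: "y = (\<lambda>t. \<Sum>e\<in>E. L e * D e t)" by (intro ext) (simp add: y_def)
  define S where "S t = (\<Sum>e\<in>E. L e * \<bar>Q e t\<bar>)" for t
  define En where "En t = p t s0" for t
  define \<Delta> where "\<Delta> e t = p t (src e) - p t (tgt e)" for e t
  have ypos: "y t > 0" if "t \<ge> 0" for t
    unfolding y_def using y_pos[OF potT[OF that] posT[OF that]] .
  have Sge: "Ls + \<delta> * \<bar>Q e0 t\<bar> \<le> S t" if "t \<ge> 0" for t
    using Sb[OF potT[OF that]] Ls_q unfolding S_def Q_def by simp
  have CSt: "(S t)^2 \<le> En t * y t" if "t \<ge> 0" for t
    using CS[OF potT[OF that] posT[OF that]] unfolding S_def Q_def En_def y_def .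
  have tel: "En t \<le> (\<Sum>e\<leftarrow>es. \<bar>\<Delta> e t\<bar>)" if "t \<ge> 0" for t
    using tele[OF potT[OF that] posT[OF that] gp] unfolding En_def \<Delta>_def .
  have Ennn: "En t \<ge> 0" if "t \<ge> 0" for t
    using En_nonneg[OF potT[OF that] posT[OF that]] unfolding En_def .
  have tle: "D e t * (\<Delta> e t)^2 / L e \<le> En t" if "t \<ge> 0" "e \<in> E" for t e
    using term_le[OF potT[OF that(1)] posT[OF that(1)] that(2)] unfolding En_def \<Delta>_def .
  have LQt: "L e * \<bar>Q e t\<bar> = D e t * \<bar>\<Delta> e t\<bar>" if "t \<ge> 0" "e \<in> E" for t e
    using LQ[OF potT[OF that(1)] posT[OF that(1)] that(2)] unfolding Q_def \<Delta>_def .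
  have Q0t: "(Q e0 t)^2 \<le> D e0 t * En t / L e0" if "t \<ge> 0" for t
    using Q0_sq[OF potT[OF that] posT[OF that]] unfolding Q_def En_def .

  have dy: "(y has_real_derivative (S t - y t)) (at t within {0..})" if "t \<ge> 0" for t
  proof -
    have 1: "((\<lambda>t. \<Sum>e\<in>E. L e * D e t) has_real_derivative (\<Sum>e\<in>E. L e * (\<bar>Q e t\<bar> - D e t))) (at t within {0..})"
      by (rule DERIV_sum, rule DERIV_cmult, rule dynQ) (use that in auto)
    have 2: "(\<Sum>e\<in>E. L e * (\<bar>Q e t\<bar> - D e t)) = S t - y t"
      unfolding S_def y_def by (simp add: right_diff_distrib sum_subtractf)
    show ?thesis using 1 unfolding 2 yfun .
  qed

  define \<Psi> where "\<Psi> t = (\<Sum>e\<leftarrow>es. L e * ln (D e t)) - Ls * ln (y t)" for t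
  define \<Psi>' where "\<Psi>' t = (\<Sum>e\<leftarrow>es. L e * ((\<bar>Q e t\<bar> - D e t) / D e t)) - Ls * ((S t - y t) / y t)" for t
  have dPsi: "(\<Psi> has_real_derivative \<Psi>' t) (at t within {0..})" if "t \<ge> 0" for t
  proof -
    have 1: "((\<lambda>t. \<Sum>e\<leftarrow>es. L e * ln (D e t)) has_real_derivative (\<Sum>e\<leftarrow>es. L e * ((\<bar>Q e t\<bar> - D e t) / D e t))) (at t within {0..})"
    proof (rule DERIV_sum_list)
      fix e assume "e \<in> set es"
      hence eE: "e \<in> E" using esE by auto
      have "((\<lambda>t. ln (D e t)) has_real_derivative (1 / D e t * (\<bar>Q e t\<bar> - D e t))) (at t within {0..})"
        by (rule DERIV_chain2[OF DERIV_ln_divide[OF D_pos[OF eE that]] dynQ[OF eE that]])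
      hence "((\<lambda>t. L e * ln (D e t)) has_real_derivative L e * (1 / D e t * (\<bar>Q e t\<bar> - D e t))) (at t within {0..})"
        by (rule DERIV_cmult)
      thus "((\<lambda>t. L e * ln (D e t)) has_real_derivative L e * ((\<bar>Q e t\<bar> - D e t) / D e t)) (at t within {0..})"
        by (rule DERIV_cong) simp
    qed
    have 2: "((\<lambda>t. Ls * ln (y t)) has_real_derivative Ls * (1 / y t * (S t - y t))) (at t within {0..})"
      by (rule DERIV_cmult, rule DERIV_chain2[OF DERIV_ln_divide[OF ypos[OF that]] dy[OF that]])
    have 3: "((\<lambda>t. (\<Sum>e\<leftarrow>es. L e * ln (D e t)) - Ls * ln (y t)) has_real_derivative
       (\<Sum>e\<leftarrow>es. L e * ((\<bar>Q e t\<bar> - D e t) / D e t)) - Ls * (1 / y t * (S t - y t))) (at t within {0..})"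
      by (rule DERIV_diff[OF 1 2])
    have 4: "\<Psi> = (\<lambda>t. (\<Sum>e\<leftarrow>es. L e * ln (D e t)) - Ls * ln (y t))" by (intro ext) (simp add: \<Psi>_def)
    show ?thesis unfolding 4 \<Psi>'_def by (rule DERIV_cong[OF 3]) simp
  qed

  have psi_ge: "Ls * \<delta> * \<bar>Q e0 t\<bar> / y t \<le> \<Psi>' t" if t: "t \<ge> 0" for t
  proof -
    have a: "(\<Sum>e\<leftarrow>es. L e * ((\<bar>Q e t\<bar> - D e t) / D e t)) = (\<Sum>e\<leftarrow>es. \<bar>\<Delta> e t\<bar>) - Ls"
    proof -
      have "(\<Sum>e\<leftarrow>es. L e * ((\<bar>Q e t\<bar> - D e t) / D e t)) = (\<Sum>e\<leftarrow>es. \<bar>\<Delta> e t\<bar> - L e)"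
      proof (rule arg_cong[where f=sum_list], rule map_cong[OF refl])
        fix e assume "e \<in> set es"
        hence eE: "e \<in> E" using esE by auto
        have Dp: "D e t > 0" using D_pos[OF eE t] .
        have "L e * ((\<bar>Q e t\<bar> - D e t) / D e t) = (L e * \<bar>Q e t\<bar>) / D e t - L e"
          using Dp by (simp add: field_simps)
        also have "\<dots> = \<bar>\<Delta> e t\<bar> - L e" using LQt[OF t eE] Dp by simp
        finally show "L e * ((\<bar>Q e t\<bar> - D e t) / D e t) = \<bar>\<Delta> e t\<bar> - L e" .
      qed
      also have "\<dots> = (\<Sum>e\<leftarrow>es. \<bar>\<Delta> e t\<bar>) - Ls" unfolding Ls_def path_length_def by (simp add: sum_list_subtractf)
      finally show ?thesis .
    qed
    have yp: "y t > 0" using ypos[OF t] .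
    have b: "(S t)^2 / y t \<le> En t" using CSt[OF t] yp by (simp add: field_simps)
    have c: "\<Psi>' t \<ge> (S t)^2 / y t - Ls * S t / y t"
    proof -
      have "\<Psi>' t = (\<Sum>e\<leftarrow>es. \<bar>\<Delta> e t\<bar>) - Ls - Ls * ((S t - y t) / y t)" unfolding \<Psi>'_def a ..
      also have "Ls * ((S t - y t) / y t) = Ls * S t / y t - Ls" using yp by (simp add: field_simps)
      finally show ?thesis using tel[OF t] b by linarith
    qed
    have d: "(S t)^2 / y t - Ls * S t / y t = S t * (S t - Ls) / y t"
      by (simp add: power2_eq_square diff_divide_distrib right_diff_distrib)
    have e: "Ls * \<delta> * \<bar>Q e0 t\<bar> \<le> S t * (S t - Ls)"
    proof -
      have s1: "\<delta> * \<bar>Q e0 t\<bar> \<le> S t - Ls" using Sge[OF t] by simp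
      have s0: "0 \<le> \<delta> * \<bar>Q e0 t\<bar>" using dpos by simp
      have "Ls * (\<delta> * \<bar>Q e0 t\<bar>) \<le> Ls * (S t - Ls)" using s1 Lsp by (intro mult_left_mono) auto
      also have "\<dots> \<le> S t * (S t - Ls)" using s1 s0 by (intro mult_right_mono) auto
      finally show ?thesis by (simp add: mult.assoc)
    qed
    have "Ls * \<delta> * \<bar>Q e0 t\<bar> / y t \<le> S t * (S t - Ls) / y t" using e yp by (simp add: divide_right_mono)
    thus ?thesis using c d by linarith
  qed
  have psi_nn: "0 \<le> \<Psi>' t" if t: "t \<ge> 0" for t
  proof -
    have "0 \<le> Ls * \<delta> * \<bar>Q e0 t\<bar> / y t" using Lsp dpos ypos[OF t] by simp
    thus ?thesis using psi_ge[OF t] by linarith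
  qed
  have Psi_mono: "\<Psi> a \<le> \<Psi> b" if "0 \<le> a" "a \<le> b" for a b
    by (rule mono_deriv[OF that dPsi]) (use that psi_nn in auto)

  define CL where "CL = (\<Sum>e\<leftarrow>es. L e * ln (L e))"
  define r where "r e t = ln (L e * D e t / y t)" for e t
  have LDy: "L e * D e t \<le> y t" if "t \<ge> 0" "e \<in> E" for e t
    unfolding y_def by (rule member_le_sum) (use that finE D_pos len_pos in \<open>auto intro!: mult_nonneg_nonneg less_imp_le\<close>)
  have rle: "r e t \<le> 0" if "t \<ge> 0" "e \<in> E" for e t
  proof -
    have "0 < L e * D e t" using that D_pos len_pos by auto
    moreover have "L e * D e t / y t \<le> 1" using LDy[OF that] ypos[OF that(1)] by simp
    ultimately show ?thesis unfolding r_def using ypos[OF that(1)] by simp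
  qed
  have rsum: "(\<Sum>e\<leftarrow>es. L e * r e t) = \<Psi> t + CL" if t: "t \<ge> 0" for t
  proof -
    have "(\<Sum>e\<leftarrow>es. L e * r e t) = (\<Sum>e\<leftarrow>es. L e * ln (D e t) + L e * ln (L e) - L e * ln (y t))"
    proof (rule arg_cong[where f=sum_list], rule map_cong[OF refl])
      fix e assume "e \<in> set es"
      hence eE: "e \<in> E" using esE by auto
      have lnr: "ln (L e * D e t / y t) = ln (L e) + ln (D e t) - ln (y t)"
        using bspec[OF len_pos eE] D_pos[OF eE t] ypos[OF t] by (simp add: ln_div ln_mult)
      show "L e * r e t = L e * ln (D e t) + L e * ln (L e) - L e * ln (y t)" unfolding r_def lnr by (simp add: algebra_simps)
    qed
    also have "\<dots> = (\<Sum>e\<leftarrow>es. L e * ln (D e t)) + CL - Ls * ln (y t)"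
      unfolding CL_def Ls_def path_length_def by (simp add: sum_list_subtractf sum_list_addf sum_list_mult_const)
    finally show ?thesis unfolding \<Psi>_def by simp
  qed
  have Lr: "L e * r e t \<le> 0" if "t \<ge> 0" "e \<in> set es" for e t
  proof -
    have eE: "e \<in> E" using that esE by auto
    have "L e > 0" "r e t \<le> 0" using len_pos eE rle[OF that(1) eE] by auto
    thus ?thesis by (simp add: mult_nonneg_nonpos)
  qed
  have Psi_le: "\<Psi> t \<le> - CL" if t: "t \<ge> 0" for t
  proof -
    have "(\<Sum>e\<leftarrow>es. L e * r e t) \<le> (\<Sum>e\<leftarrow>es. 0)"
      by (rule sum_list_mono) (use Lr t in auto)
    thus ?thesis using rsum[OF t] by simp
  qed
  define m where "m = \<Psi> 0 + CL"
  define c where "c e = exp (m / L e)" for e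
  have Dlow: "c e * y t \<le> L e * D e t" if t: "t \<ge> 0" and e: "e \<in> set es" for e t
  proof -
    have eE: "e \<in> E" using e esE by auto
    have Lp: "L e > 0" using len_pos eE by auto
    have "m \<le> (\<Sum>e\<leftarrow>es. L e * r e t)" unfolding m_def rsum[OF t] using Psi_mono[of 0 t] t by simp
    also have "\<dots> \<le> L e * r e t"
      by (rule sum_list_single_ge[OF _ e]) (use Lr t in auto)
    finally have "m / L e \<le> r e t" using Lp by (simp add: pos_divide_le_eq mult.commute)
    hence "c e \<le> exp (r e t)" unfolding c_def by simp
    also have "exp (r e t) = L e * D e t / y t" unfolding r_def using Lp D_pos[OF eE t] ypos[OF t] by simp
    finally show ?thesis using ypos[OF t] by (simp add: field_simps)
  qed
  define K1 where "K1 = (\<Sum>e\<leftarrow>es. L e / sqrt (c e))"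
  have K1nn: "K1 \<ge> 0" unfolding K1_def using esE len_pos
    by (intro sum_list_nonneg) (auto simp: c_def intro!: divide_nonneg_pos less_imp_le)
  have Eny: "En t * y t \<le> K1^2" if t: "t \<ge> 0" for t
  proof -
    define a where "a = sqrt (En t / y t)"
    have yp: "y t > 0" using ypos[OF t] .
    have an: "a \<ge> 0" unfolding a_def using Ennn[OF t] yp by simp
    have a2: "a^2 = En t / y t" unfolding a_def using Ennn[OF t] yp by simp
    have dle: "\<bar>\<Delta> e t\<bar> \<le> a * (L e / sqrt (c e))" if e: "e \<in> set es" for e
    proof -
      have eE: "e \<in> E" using e esE by auto
      have Dp: "D e t > 0" and Lp: "L e > 0" and cp: "c e > 0" using D_pos[OF eE t] len_pos eE by (auto simp: c_def)
      have "(\<Delta> e t)^2 \<le> En t * L e / D e t" using tle[OF t eE] Dp Lp by (simp add: field_simps)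
      also have "\<dots> \<le> En t * L e / (c e * y t / L e)"
      proof (rule divide_left_mono)
        show "c e * y t / L e \<le> D e t" using Dlow[OF t e] Lp by (simp add: field_simps)
        show "0 \<le> En t * L e" using Ennn[OF t] Lp by simp
        show "0 < D e t * (c e * y t / L e)" using Dp cp yp Lp by simp
      qed
      also have "\<dots> = (a * (L e / sqrt (c e)))^2"
      proof -
        have sc: "(sqrt (c e))^2 = c e" using cp by simp
        show ?thesis unfolding power_mult_distrib power_divide a2 sc using cp yp Lp by (simp add: field_simps power2_eq_square)
      qed
      finally have "\<bar>\<Delta> e t\<bar>^2 \<le> (a * (L e / sqrt (c e)))^2" by simp
      thus ?thesis by (rule power2_le_imp_le) (use an Lp cp in simp)
    qed
    have "(\<Sum>e\<leftarrow>es. \<bar>\<Delta> e t\<bar>) \<le> (\<Sum>e\<leftarrow>es. a * (L e / sqrt (c e)))"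
      by (rule sum_list_mono) (use dle in auto)
    moreover have "(\<Sum>e\<leftarrow>es. a * (L e / sqrt (c e))) = a * K1" unfolding K1_def by (rule sum_list_const_mult)
    ultimately have Ea: "En t \<le> a * K1" using tel[OF t] by linarith
    have Eeq: "En t = a^2 * y t" using a2 yp by simp
    show ?thesis
    proof (cases "a = 0")
      case True thus ?thesis using Eeq by simp
    next
      case False
      hence ap: "a > 0" using an by simp
      have "a * (a * y t) \<le> a * K1" using Ea Eeq by (simp add: power2_eq_square mult.assoc)
      hence "a * y t \<le> K1" using ap by simp
      hence "(a * y t)^2 \<le> K1^2" using ap yp by (intro power_mono) auto
      thus ?thesis using Eeq by (simp add: power2_eq_square algebra_simps)
    qed
  qed
  have SK: "S t \<le> K1" if t: "t \<ge> 0" for t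
    by (rule power2_le_imp_le) (use CSt[OF t] Eny[OF t] K1nn in auto)
  define Ymax where "Ymax = max (y 0) K1"
  define Ymin where "Ymin = min (y 0) Ls"
  have dexp: "((\<lambda>t. (y t - C) * exp t) has_real_derivative ((S s - C) * exp s)) (at s within {0..})" if s: "s \<ge> 0" for s C
  proof -
    have "((\<lambda>t. (y t - C) * exp t) has_real_derivative ((y s - C) * exp s + (S s - y s - 0) * exp s)) (at s within {0..})"
      by (rule DERIV_mult'[OF DERIV_diff[OF dy[OF s] DERIV_const] has_field_derivative_at_within[OF DERIV_exp]])
    thus ?thesis by (rule DERIV_cong) (simp add: algebra_simps)
  qed
  have ymax: "y t \<le> Ymax" if t: "t \<ge> 0" for t
  proof -
    have "(\<lambda>t. - ((y t - Ymax) * exp t)) 0 \<le> (\<lambda>t. - ((y t - Ymax) * exp t)) t"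
    proof (rule mono_deriv[OF order_refl t, where g' = "\<lambda>t. - ((S t - Ymax) * exp t)"])
      fix s assume s: "0 \<le> s" "s \<le> t"
      show "((\<lambda>t. - ((y t - Ymax) * exp t)) has_real_derivative - ((S s - Ymax) * exp s)) (at s within {0..})"
        by (rule DERIV_minus[OF dexp[OF s(1)]])
    next
      fix s assume s: "0 < s" "s < t"
      have "S s \<le> Ymax" using SK[of s] s unfolding Ymax_def by auto
      thus "0 \<le> - ((S s - Ymax) * exp s)" by (simp add: mult_nonpos_nonneg)
    qed
    hence "(y t - Ymax) * exp t \<le> y 0 - Ymax" by simp
    also have "\<dots> \<le> 0" unfolding Ymax_def by simp
    finally show ?thesis by (simp add: mult_le_0_iff)
  qed
  have ymin: "Ymin \<le> y t" if t: "t \<ge> 0" for t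
  proof -
    have "(\<lambda>t. (y t - Ymin) * exp t) 0 \<le> (\<lambda>t. (y t - Ymin) * exp t) t"
    proof (rule mono_deriv[OF order_refl t, where g' = "\<lambda>t. (S t - Ymin) * exp t"])
      fix s assume s: "0 \<le> s" "s \<le> t"
      show "((\<lambda>t. (y t - Ymin) * exp t) has_real_derivative (S s - Ymin) * exp s) (at s within {0..})"
        by (rule dexp[OF s(1)])
    next
      fix s assume s: "0 < s" "s < t"
      have "0 \<le> \<delta> * \<bar>Q e0 s\<bar>" using dpos by simp
      hence "Ls \<le> S s" using Sge[of s] s by linarith
      hence "Ymin \<le> S s" unfolding Ymin_def by auto
      thus "0 \<le> (S s - Ymin) * exp s" by simp
    qed
    hence "0 \<le> (y t - Ymin) * exp t" unfolding Ymin_def by auto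
    thus ?thesis by (simp add: zero_le_mult_iff)
  qed
  have Ymp: "Ymax > 0" using ypos[of 0] unfolding Ymax_def by auto
  have Yminp: "Ymin > 0" using ypos[of 0] Lsp unfolding Ymin_def by auto
  define \<kappa> where "\<kappa> = Ls * \<delta> / Ymax"
  have kp: "\<kappa> > 0" using Lsp dpos Ymp unfolding \<kappa>_def by simp
  define M where "M t = \<Psi> t - \<kappa> * D e0 t" for t
  have Mfun: "M = (\<lambda>t. \<Psi> t - \<kappa> * D e0 t)" by (intro ext) (simp add: M_def)
  have dM: "(M has_real_derivative (\<Psi>' t - \<kappa> * (\<bar>Q e0 t\<bar> - D e0 t))) (at t within {0..})" if t: "t \<ge> 0" for t
    unfolding Mfun by (rule DERIV_diff[OF dPsi[OF t] DERIV_cmult[OF dynQ[OF e0_in t]]])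
  have Mge: "\<kappa> * D e0 t \<le> \<Psi>' t - \<kappa> * (\<bar>Q e0 t\<bar> - D e0 t)" if t: "t \<ge> 0" for t
  proof -
    have "\<kappa> * \<bar>Q e0 t\<bar> = Ls * \<delta> * \<bar>Q e0 t\<bar> / Ymax" unfolding \<kappa>_def by simp
    also have "\<dots> \<le> Ls * \<delta> * \<bar>Q e0 t\<bar> / y t"
      by (rule divide_left_mono) (use ymax[OF t] ypos[OF t] Ymp Lsp dpos in auto)
    also have "\<dots> \<le> \<Psi>' t" by (rule psi_ge[OF t])
    finally show ?thesis by (simp add: algebra_simps)
  qed
  have M_mono: "M a \<le> M b" if "0 \<le> a" "a \<le> b" for a b
  proof (rule mono_deriv[OF that dM])
    fix t assume "a < t" "t < b"
    hence t: "t \<ge> 0" using that by simp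
    have "0 \<le> \<kappa> * D e0 t" using kp D_pos[OF e0_in t] by simp
    thus "0 \<le> \<Psi>' t - \<kappa> * (\<bar>Q e0 t\<bar> - D e0 t)" using Mge[OF t] by linarith
  qed (use that in auto)
  have M_le: "M t \<le> - CL" if t: "t \<ge> 0" for t
    using Psi_le[OF t] kp D_pos[OF e0_in t] unfolding M_def by (smt (verit) mult_pos_pos)
  define \<theta> where "\<theta> = 1 - exp (-1::real)"
  have thp: "\<theta> > 0" unfolding \<theta>_def by simp
  have step: "\<kappa> * D e0 t0 * \<theta> \<le> M (t0 + 1) - M t0" if t0: "t0 \<ge> 0" for t0
  proof -
    define C where "C = \<kappa> * D e0 t0 * exp t0"
    define h where "h s = M s + C * exp (- s)" for s
    have hfun: "h = (\<lambda>s. M s + C * exp (- s))" by (intro ext) (simp add: h_def)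
    have "h t0 \<le> h (t0 + 1)"
    proof (rule mono_deriv[OF t0, where g' = "\<lambda>s. (\<Psi>' s - \<kappa> * (\<bar>Q e0 s\<bar> - D e0 s)) + C * (exp (- s) * (- 1))"])
      fix s assume s: "t0 \<le> s" "s \<le> t0 + 1"
      have e: "((\<lambda>s. exp (- s)) has_real_derivative exp (- s) * (- 1)) (at s within {0..})"
        by (rule DERIV_chain2[OF DERIV_exp DERIV_minus[OF DERIV_ident]])
      show "(h has_real_derivative (\<Psi>' s - \<kappa> * (\<bar>Q e0 s\<bar> - D e0 s)) + C * (exp (- s) * (- 1))) (at s within {0..})"
        unfolding hfun by (rule DERIV_add[OF dM DERIV_cmult[OF e]]) (use s t0 in auto)
    next
      fix s assume s: "t0 < s" "s < t0 + 1"
      hence s0: "s \<ge> 0" using t0 by simp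
      have "D e0 t0 * exp t0 \<le> D e0 s * exp s" using exp_mono_D[OF e0_in t0] s by simp
      hence "D e0 t0 * exp t0 * exp (- s) \<le> D e0 s * exp s * exp (- s)" by (simp add: mult_right_mono)
      hence "D e0 t0 * exp t0 * exp (- s) \<le> D e0 s" by (simp add: mult.assoc exp_minus_inverse)
      hence "C * exp (- s) \<le> \<kappa> * D e0 s" unfolding C_def using kp by (simp add: mult.assoc mult_left_mono)
      thus "0 \<le> (\<Psi>' s - \<kappa> * (\<bar>Q e0 s\<bar> - D e0 s)) + C * (exp (- s) * (- 1))" using Mge[OF s0] by linarith
    qed simp
    hence "M t0 + C * exp (- t0) \<le> M (t0 + 1) + C * exp (- (t0 + 1))" unfolding h_def .
    moreover have "C * exp (- t0) = \<kappa> * D e0 t0" unfolding C_def by (simp add: mult.assoc exp_minus_inverse)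
    moreover have "C * exp (- (t0 + 1)) = \<kappa> * D e0 t0 * exp (-1)"
      unfolding C_def by (simp add: mult.assoc exp_add[symmetric])
    ultimately show ?thesis unfolding \<theta>_def by (simp add: algebra_simps)
  qed
  define Ms where "Ms = Sup (M ` {0..})"
  have bddM: "bdd_above (M ` {0..})" using M_le by (intro bdd_aboveI[of _ "- CL"]) auto
  have M_Ms: "M t \<le> Ms" if "t \<ge> 0" for t unfolding Ms_def by (rule cSup_upper[OF _ bddM]) (use that in auto)
  have Dlim: "\<forall>\<epsilon>>0. \<exists>T. \<forall>t\<ge>T. D e0 t < \<epsilon> \<and> t \<ge> 0"
  proof (intro allI impI)
    fix \<epsilon> :: real assume ep: "\<epsilon> > 0"
    have "Ms - \<kappa> * \<epsilon> * \<theta> < Ms" using kp ep thp by simp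
    then obtain T where T: "T \<ge> 0" "Ms - \<kappa> * \<epsilon> * \<theta> < M T"
      unfolding Ms_def using less_cSup_iff[OF _ bddM] by auto
    have "D e0 t < \<epsilon> \<and> t \<ge> 0" if tT: "t \<ge> T" for t
    proof -
      have t: "t \<ge> 0" using tT T by simp
      have "\<kappa> * D e0 t * \<theta> \<le> M (t + 1) - M t" by (rule step[OF t])
      also have "\<dots> \<le> Ms - M T" using M_Ms[of "t + 1"] M_mono[OF T(1) tT] t by simp
      also have "\<dots> < \<kappa> * \<epsilon> * \<theta>" using T by simp
      finally have "\<kappa> * \<theta> * D e0 t < \<kappa> * \<theta> * \<epsilon>" by (simp add: algebra_simps)
      hence "D e0 t < \<epsilon>" using kp thp by (simp add: mult_less_cancel_left_pos)
      thus ?thesis using t by simp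
    qed
    thus "\<exists>T. \<forall>t\<ge>T. D e0 t < \<epsilon> \<and> t \<ge> 0" by blast
  qed
  have lim1: "((\<lambda>t. D e0 t) \<longlongrightarrow> 0) at_top"
    unfolding tendsto_iff eventually_at_top_linorder
  proof (intro allI impI)
    fix \<epsilon> :: real assume "\<epsilon> > 0"
    then obtain T where T: "\<forall>t\<ge>T. D e0 t < \<epsilon> \<and> t \<ge> 0" using Dlim by blast
    show "\<exists>N. \<forall>n\<ge>N. dist (D e0 n) 0 < \<epsilon>"
    proof (intro exI[of _ T] allI impI)
      fix n assume "n \<ge> T"
      hence "D e0 n < \<epsilon>" "n \<ge> 0" using T by auto
      moreover have "D e0 n > 0" using D_pos[OF e0_in \<open>n \<ge> 0\<close>] .
      ultimately show "dist (D e0 n) 0 < \<epsilon>" by (simp add: dist_real_def)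
    qed
  qed
  have lim2: "((\<lambda>t. Q e0 t) \<longlongrightarrow> 0) at_top"
    unfolding tendsto_iff eventually_at_top_linorder
  proof (intro allI impI)
    fix \<epsilon> :: real assume ep: "\<epsilon> > 0"
    define K where "K = K1^2 / Ymin / L e0"
    have Kp: "K \<ge> 0" unfolding K_def using Yminp bspec[OF len_pos e0_in] by simp
    define \<eta> where "\<eta> = \<epsilon>^2 / (K + 1)"
    have etap: "\<eta> > 0" unfolding \<eta>_def using ep Kp by simp
    obtain T where T: "\<forall>t\<ge>T. D e0 t < \<eta> \<and> t \<ge> 0" using Dlim etap by blast
    have "\<bar>Q e0 t\<bar> < \<epsilon>" if tT: "t \<ge> T" for t
    proof -
      have t: "t \<ge> 0" and Dt: "D e0 t < \<eta>" using T tT by auto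
      have L0: "L e0 > 0" using len_pos e0_in by simp
      have "En t \<le> K1^2 / Ymin"
      proof -
        have "En t * Ymin \<le> En t * y t" using ymin[OF t] Ennn[OF t] by (simp add: mult_left_mono)
        also have "\<dots> \<le> K1^2" by (rule Eny[OF t])
        finally show ?thesis using Yminp by (simp add: field_simps)
      qed
      hence "D e0 t * En t / L e0 \<le> D e0 t * (K1^2 / Ymin) / L e0"
        using D_pos[OF e0_in t] L0 by (intro divide_right_mono mult_left_mono) auto
      also have "\<dots> = D e0 t * K" unfolding K_def by simp
      also have "\<dots> \<le> \<eta> * K" using Dt Kp by (simp add: mult_right_mono)
      also have "\<dots> < \<epsilon>^2"
      proof -
        have "\<eta> * K = \<epsilon>^2 * (K / (K + 1))" unfolding \<eta>_def by simp
        also have "\<dots> < \<epsilon>^2 * 1" using Kp ep by (intro mult_strict_left_mono) auto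
        finally show ?thesis by simp
      qed
      finally have "\<bar>Q e0 t\<bar>^2 < \<epsilon>^2" using Q0t[OF t] by simp
      thus ?thesis by (rule power2_less_imp_less) (use ep in simp)
    qed
    thus "\<exists>N. \<forall>n\<ge>N. dist (Q e0 n) 0 < \<epsilon>" by (auto simp: dist_real_def)
  qed
  show ?thesis using lim1 lim2 by simp
qed

end

theorem mainTheorem7:
  fixes N :: "'v set" and E :: "'e set" and src tgt :: "'e \<Rightarrow> 'v" and s0 s1 :: 'v
    and L :: "'e \<Rightarrow> real" and D :: "'e \<Rightarrow> real \<Rightarrow> real" and p :: "real \<Rightarrow> 'v \<Rightarrow> real"
  assumes graph: "phys_graph N E src tgt s0 s1"
    and len_pos: "\<forall>e\<in>E. L e > 0"
    and init_pos: "\<forall>e\<in>E. D e 0 > 0"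
    and pot: "\<forall>t\<ge>0. potentials N E src tgt s0 s1 L (\<lambda>e. D e t) (p t)"
    and dyn: "\<forall>e\<in>E. \<forall>t\<ge>0. (D e has_real_derivative
                 (\<bar>current src tgt L (\<lambda>e'. D e' t) (p t) e\<bar> - D e t)) (at t within {0..})"
    and e_in: "e \<in> E"
    and not_short: "\<not> on_shortest_path E src tgt L s0 s1 e"
  shows "((\<lambda>t. D e t) \<longlongrightarrow> 0) at_top \<and>
         ((\<lambda>t. current src tgt L (\<lambda>e'. D e' t) (p t) e) \<longlongrightarrow> 0) at_top"
proof -
  interpret physd N E src tgt s0 s1 L e D p
    by unfold_locales (use assms in auto)
  show ?thesis using main unfolding Q_def .
qed

end
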